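(* Let $\Omega$ be the closure of a bounded domain in $\mathbb{R}^d$, let $X$ be a Banach space of functions on $\Omega$ with $C(\Omega)\subset X$ and $\|g\|_X\le C_X\|g\|_{C(\Omega)}$ for $g\in C(\Omega)$, and let $K$ be a compact subset of $C(\Omega)$. Let ${\bf x}=(x_1,\dots,x_m)\in\Omega^m$, $f\in K$, $w:=\lambda_{\bf x}(f)$, and assume $R(K_w)_X\neq0$. Define on $C(\Omega)$ $$\mathcal{L}'_K(g):=\|\lambda_{\bf x}(g)-w\|+\operatorname{dist}(g,K)_{C(\Omega)} .$$ Let $C>2$ and let $\delta>0$ satisfy $$C_X\varepsilon+2R(K(w,2\varepsilon))_X\le C\,R(K_w)_X,\qquad\varepsilon:=2\delta$$ (this holds for all sufficiently small $\delta$). Let $\Sigma\subset C(\Omega)$ satisfy $\operatorname{dist}(K,\Sigma)_{C(\Omega)}<\delta$ and let $\hat f\in\mathop{\rm argmin}_{g\in\Sigma}\mathcal{L}'_K(g)$ be any minimizer. Then $\|f-\hat f\|_X\le C\,R(K_w)_X$.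
   Context: $\lambda_{\bf x}(g):=(g(x_1),\dots,g(x_m))$; on $\mathbb{R}^m$, $\|v\|:=\big[\frac1m\sum_{j=1}^m|v_j|^2\big]^{1/2}$. $\operatorname{dist}(g,K)_{C(\Omega)}:=\inf_{h\in K}\|g-h\|_{C(\Omega)}$; for $A,B\subset C(\Omega)$, $\operatorname{dist}(A,B)_{C(\Omega)}:=\sup_{a\in A}\inf_{b\in B}\|a-b\|_{C(\Omega)}$. $K_{w'}:=\{h\in K:\lambda_{\bf x}(h)=w'\}$, $K(w,\varepsilon):=\bigcup_{w'\in\mathbb{R}^m,\ \|w'-w\|\le\varepsilon}K_{w'}$. For $S\subset X$, $R(S)_X:=\inf\{r:\ S\subset B(z,r)_X\text{ for some }z\in X\}$ (Chebyshev radius in $X$). *)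

theory Defs
  imports "HOL-Analysis.Analysis"
begin

definition CO :: "'a::topological_space set \<Rightarrow> ('a \<Rightarrow> real) set" where
  "CO Om = {g. continuous_on Om g \<and> (\<forall>x. x \<notin> Om \<longrightarrow> g x = 0)}"

definition supn :: "'a set \<Rightarrow> ('a \<Rightarrow> real) \<Rightarrow> real" where
  "supn Om g = (SUP x\<in>Om. \<bar>g x\<bar>)"

definition compact_C :: "'a::topological_space set \<Rightarrow> ('a \<Rightarrow> real) set \<Rightarrow> bool" where
  "compact_C Om K \<longleftrightarrow> K \<subseteq> CO Om \<and>
     (\<forall>s::nat \<Rightarrow> 'a \<Rightarrow> real. (\<forall>n. s n \<in> K) \<longrightarrow>
        (\<exists>(r::nat \<Rightarrow> nat) g. strict_mono r \<and> g \<in> K \<and> (\<lambda>n. supn Om (\<lambda>x. s (r n) x - g x)) \<longlonglongrightarrow> 0))"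

definition distC :: "'a set \<Rightarrow> ('a \<Rightarrow> real) \<Rightarrow> ('a \<Rightarrow> real) set \<Rightarrow> real" where
  "distC Om g K = (INF h\<in>K. supn Om (\<lambda>x. g x - h x))"

definition distCset :: "'a set \<Rightarrow> ('a \<Rightarrow> real) set \<Rightarrow> ('a \<Rightarrow> real) set \<Rightarrow> real" where
  "distCset Om A B = (SUP a\<in>A. INF b\<in>B. supn Om (\<lambda>x. a x - b x))"

text \<open>Sampling operator lambda_x for points xs 0, ..., xs (m-1); vectors in R^m are
  functions nat => real that vanish from index m on.\<close>
definition lam :: "nat \<Rightarrow> (nat \<Rightarrow> 'a) \<Rightarrow> ('a \<Rightarrow> real) \<Rightarrow> (nat \<Rightarrow> real)" where
  "lam m xs g = (\<lambda>j. if j < m then g (xs j) else 0)"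

definition vnorm :: "nat \<Rightarrow> (nat \<Rightarrow> real) \<Rightarrow> real" where
  "vnorm m v = sqrt ((1 / real m) * (\<Sum>j<m. (v j)\<^sup>2))"

definition Rm :: "nat \<Rightarrow> (nat \<Rightarrow> real) set" where
  "Rm m = {v. \<forall>j\<ge>m. v j = 0}"

definition Kw :: "nat \<Rightarrow> (nat \<Rightarrow> 'a) \<Rightarrow> ('a \<Rightarrow> real) set \<Rightarrow> (nat \<Rightarrow> real) \<Rightarrow> ('a \<Rightarrow> real) set" where
  "Kw m xs K w' = {h \<in> K. lam m xs h = w'}"

definition Kweps :: "nat \<Rightarrow> (nat \<Rightarrow> 'a) \<Rightarrow> ('a \<Rightarrow> real) set \<Rightarrow> (nat \<Rightarrow> real) \<Rightarrow> real \<Rightarrow> ('a \<Rightarrow> real) set" where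
  "Kweps m xs K w eps = (\<Union>w'\<in>{w'\<in>Rm m. vnorm m (\<lambda>j. w' j - w j) \<le> eps}. Kw m xs K w')"

text \<open>Chebyshev radius in X of a set S of functions, X given via the embedding J.\<close>
definition chebR :: "(('a \<Rightarrow> real) \<Rightarrow> 'x::real_normed_vector) \<Rightarrow> ('a \<Rightarrow> real) set \<Rightarrow> real" where
  "chebR J S = Inf {r. \<exists>z. J ` S \<subseteq> cball z r}"

definition lossK :: "'a set \<Rightarrow> nat \<Rightarrow> (nat \<Rightarrow> 'a) \<Rightarrow> ('a \<Rightarrow> real) set \<Rightarrow> (nat \<Rightarrow> real) \<Rightarrow> ('a \<Rightarrow> real) \<Rightarrow> real" where
  "lossK Om m xs K w g = vnorm m (\<lambda>j. lam m xs g j - w j) + distC Om g K"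

end

theory Submission
  imports Defs
begin

lemma vnorm_L2: "vnorm m v = sqrt (1 / real m) * L2_set v {..<m}"
  unfolding vnorm_def L2_set_def by (simp only: real_sqrt_mult)

lemma vnorm_tri: "vnorm m (\<lambda>j. a j + b j) \<le> vnorm m a + vnorm m b"
proof -
  have "L2_set (\<lambda>j. a j + b j) {..<m} \<le> L2_set a {..<m} + L2_set b {..<m}"
    by (rule L2_set_triangle_ineq)
  hence "sqrt (1 / real m) * L2_set (\<lambda>j. a j + b j) {..<m} \<le> sqrt (1 / real m) * (L2_set a {..<m} + L2_set b {..<m})"
    by (rule mult_left_mono) simp
  thus ?thesis unfolding vnorm_L2 by (simp add: distrib_left)
qed

lemma vnorm_nonneg: "vnorm m v \<ge> 0"
  unfolding vnorm_def by (simp add: sum_nonneg)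

lemma vnorm_bound:
  assumes "m > 0" "\<And>j. j < m \<Longrightarrow> \<bar>v j\<bar> \<le> s"
  shows "vnorm m v \<le> s"
proof -
  have s: "s \<ge> 0" using assms(2)[of 0] assms(1) by simp
  have "(\<Sum>j<m. (v j)\<^sup>2) \<le> (\<Sum>j<m. s\<^sup>2)"
    by (rule sum_mono) (metis abs_ge_zero assms(2) lessThan_iff power2_abs power_mono)
  also have "\<dots> = real m * s\<^sup>2" by simp
  finally have "(1 / real m) * (\<Sum>j<m. (v j)\<^sup>2) \<le> s\<^sup>2"
    using assms(1) by (simp add: field_simps)
  hence "vnorm m v \<le> sqrt (s\<^sup>2)" unfolding vnorm_def by (rule real_sqrt_le_mono)
  thus ?thesis using s by simp
qed

lemma bdd_abs:
  fixes g :: "'a::topological_space \<Rightarrow> real"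
  assumes "compact Om" "continuous_on Om g"
  shows "bdd_above ((\<lambda>x. \<bar>g x\<bar>) ` Om)"
proof -
  have "continuous_on Om (\<lambda>x. \<bar>g x\<bar>)" using assms(2) by (rule continuous_on_rabs)
  hence "compact ((\<lambda>x. \<bar>g x\<bar>) ` Om)" using assms(1) compact_continuous_image by blast
  thus ?thesis by (rule bounded_imp_bdd_above[OF compact_imp_bounded])
qed

lemma supn_upper:
  fixes g :: "'a::topological_space \<Rightarrow> real"
  assumes "compact Om" "continuous_on Om g" "x \<in> Om"
  shows "\<bar>g x\<bar> \<le> supn Om g"
  unfolding supn_def using bdd_abs[OF assms(1,2)] assms(3) by (rule cSUP_upper2) simp

lemma supn_nonneg:
  fixes g :: "'a::topological_space \<Rightarrow> real"
  assumes "compact Om" "continuous_on Om g" "Om \<noteq> {}"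
  shows "0 \<le> supn Om g"
proof -
  obtain x where x: "x \<in> Om" using assms(3) by blast
  have "\<bar>g x\<bar> \<le> supn Om g" using supn_upper[OF assms(1,2) x] .
  thus ?thesis by linarith
qed

lemma supn_tri:
  assumes "compact Om" "Om \<noteq> {}" "continuous_on Om v" "continuous_on Om w"
    and "\<And>x. x \<in> Om \<Longrightarrow> \<bar>u x\<bar> \<le> \<bar>v x\<bar> + \<bar>w x\<bar>"
  shows "supn Om u \<le> supn Om v + supn Om w"
  unfolding supn_def
proof (rule cSUP_least[OF assms(2)])
  fix x assume x: "x \<in> Om"
  have "\<bar>u x\<bar> \<le> \<bar>v x\<bar> + \<bar>w x\<bar>" using assms(5) x .
  also have "\<dots> \<le> supn Om v + supn Om w"
    using supn_upper[OF assms(1,3) x] supn_upper[OF assms(1,4) x] by simp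
  finally show "\<bar>u x\<bar> \<le> (SUP x\<in>Om. \<bar>v x\<bar>) + (SUP x\<in>Om. \<bar>w x\<bar>)" unfolding supn_def .
qed

lemma supn_le:
  assumes "Om \<noteq> {}" "\<And>x. x \<in> Om \<Longrightarrow> \<bar>u x\<bar> \<le> s"
  shows "supn Om u \<le> s"
  unfolding supn_def using assms by (rule cSUP_least)


theorem theorem4p5:
  fixes D :: "'a::euclidean_space set"
    and J :: "('a \<Rightarrow> real) \<Rightarrow> 'x::banach"
    and CX :: real
    and K Sigma :: "('a \<Rightarrow> real) set"
    and m :: nat and xs :: "nat \<Rightarrow> 'a"
    and f fhat :: "'a \<Rightarrow> real"
    and C \<delta> :: real
  defines "Om \<equiv> closure D"
  defines "w \<equiv> lam m xs f"
  defines "\<epsilon> \<equiv> 2 * \<delta>"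
  assumes D: "open D" "connected D" "bounded D" "D \<noteq> {}"
    and J_add: "\<And>g h. g \<in> CO Om \<Longrightarrow> h \<in> CO Om \<Longrightarrow> J (\<lambda>x. g x + h x) = J g + J h"
    and J_scale: "\<And>c g. g \<in> CO Om \<Longrightarrow> J (\<lambda>x. c * g x) = c *\<^sub>R J g"
    and J_inj: "inj_on J (CO Om)"
    and J_bound: "\<And>g. g \<in> CO Om \<Longrightarrow> norm (J g) \<le> CX * supn Om g"
    and K: "compact_C Om K"
    and m: "m > 0"
    and xs: "\<And>i. i < m \<Longrightarrow> xs i \<in> Om"
    and f: "f \<in> K"
    and R0: "chebR J (Kw m xs K w) \<noteq> 0"
    and C: "C > 2"
    and \<delta>: "\<delta> > 0"
    and cond: "CX * \<epsilon> + 2 * chebR J (Kweps m xs K w (2 * \<epsilon>)) \<le> C * chebR J (Kw m xs K w)"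
    and Sigma: "Sigma \<subseteq> CO Om"
    and dist: "distCset Om K Sigma < \<delta>"
    and fhat: "fhat \<in> Sigma" "\<And>g. g \<in> Sigma \<Longrightarrow> lossK Om m xs K w fhat \<le> lossK Om m xs K w g"
  shows "norm (J f - J fhat) \<le> C * chebR J (Kw m xs K w)"
proof -
  have cOm: "compact Om" unfolding Om_def
    using D(3) by (simp add: compact_eq_bounded_closed bounded_closure)
  have neOm: "Om \<noteq> {}" unfolding Om_def using D(4) closure_subset by blast
  have KCO: "K \<subseteq> CO Om" using K unfolding compact_C_def by blast
  have cont: "\<And>g. g \<in> CO Om \<Longrightarrow> continuous_on Om g" by (simp add: CO_def)
  have contd: "\<And>a b. a \<in> CO Om \<Longrightarrow> b \<in> CO Om \<Longrightarrow> continuous_on Om (\<lambda>x. a x - b x)"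
    using cont by (intro continuous_on_diff) auto
  have sym: "\<And>a b. supn Om (\<lambda>x. a x - b x) = supn Om (\<lambda>x. b x - a x)"
    unfolding supn_def by (simp add: abs_minus_commute)
  have fhatCO: "fhat \<in> CO Om" using fhat(1) Sigma by blast
  have fCO: "f \<in> CO Om" using f KCO by blast
  obtain M where M: "\<And>g. g \<in> K \<Longrightarrow> supn Om g \<le> M"
  proof (rule ccontr)
    assume "\<not> thesis"
    with that have "\<forall>M. \<exists>g\<in>K. supn Om g > M" by (meson not_le)
    hence "\<forall>n::nat. \<exists>g. g \<in> K \<and> supn Om g > real n" by blast
    then obtain s where s0: "\<forall>n. s n \<in> K \<and> supn Om (s n) > real n"
      using choice[of "\<lambda>n g. g \<in> K \<and> supn Om g > real n"] by blast
    hence s: "\<And>n. s n \<in> K" "\<And>n. supn Om (s n) > real n" by auto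
    obtain r g0 where r: "strict_mono r" "g0 \<in> K"
      and lim: "(\<lambda>n. supn Om (\<lambda>x. s (r n) x - g0 x)) \<longlonglongrightarrow> 0"
      using K s(1) unfolding compact_C_def by blast
    have "eventually (\<lambda>n. supn Om (\<lambda>x. s (r n) x - g0 x) < 1) sequentially"
      using order_tendstoD(2)[OF lim] by simp
    then obtain N0 where N0: "\<And>n. n \<ge> N0 \<Longrightarrow> supn Om (\<lambda>x. s (r n) x - g0 x) < 1"
      by (auto simp: eventually_sequentially)
    define n where "n = max N0 (nat \<lceil>supn Om g0 + 1\<rceil>)"
    have g0CO: "g0 \<in> CO Om" using r(2) KCO by blast
    have snCO: "s (r n) \<in> CO Om" using s(1) KCO by blast
    have "supn Om (s (r n)) \<le> supn Om (\<lambda>x. s (r n) x - g0 x) + supn Om g0"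
      by (rule supn_tri[OF cOm neOm contd[OF snCO g0CO] cont[OF g0CO]]) linarith
    also have "\<dots> < 1 + supn Om g0" using N0[of n] unfolding n_def by simp
    also have "\<dots> \<le> real n" unfolding n_def by linarith
    also have "\<dots> \<le> real (r n)" using seq_suble[OF r(1), of n] by simp
    finally show False using s(2)[of "r n"] by simp
  qed
  define e1 where "e1 = (\<lambda>x. if x \<in> Om then 1 else (0::real))"
  have e1CO: "e1 \<in> CO Om" unfolding CO_def e1_def
    by (auto intro: continuous_on_eq[of Om "\<lambda>x. 1"])
  have zCO: "(\<lambda>x. 0::real) \<in> CO Om" unfolding CO_def by simp
  have J0: "J (\<lambda>x. 0) = 0" using J_scale[OF e1CO, of 0] by simp
  have "J e1 \<noteq> 0"
  proof
    assume "J e1 = 0"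
    hence "e1 = (\<lambda>x. 0)" using J_inj e1CO zCO J0 by (metis inj_on_def)
    moreover obtain x0 where "x0 \<in> Om" using neOm by blast
    ultimately show False unfolding e1_def by (metis one_neq_zero)
  qed
  hence "0 < CX * supn Om e1" using J_bound[OF e1CO] by (metis zero_less_norm_iff order_less_le_trans)
  moreover have "0 \<le> supn Om e1" by (rule supn_nonneg[OF cOm cont[OF e1CO] neOm])
  ultimately have CX: "CX > 0" by (metis mult_nonpos_nonneg not_le)
  have Jdiff: "\<And>a b. a \<in> CO Om \<Longrightarrow> b \<in> CO Om \<Longrightarrow> J (\<lambda>x. a x - b x) = J a - J b"
  proof -
    fix a b assume a: "a \<in> CO Om" and b: "b \<in> CO Om"
    have nb: "(\<lambda>x. -1 * b x) \<in> CO Om" using b unfolding CO_def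
      by (auto intro: continuous_intros)
    have "J (\<lambda>x. a x - b x) = J (\<lambda>x. a x + (\<lambda>x. -1 * b x) x)" by simp
    also have "\<dots> = J a + J (\<lambda>x. -1 * b x)" by (rule J_add[OF a nb])
    also have "\<dots> = J a - J b" using J_scale[OF b, of "-1"] by simp
    finally show "J (\<lambda>x. a x - b x) = J a - J b" .
  qed
  have samp: "\<And>a b. a \<in> CO Om \<Longrightarrow> b \<in> CO Om \<Longrightarrow>
      vnorm m (\<lambda>j. lam m xs a j - lam m xs b j) \<le> supn Om (\<lambda>x. a x - b x)"
  proof -
    fix a b assume a: "a \<in> CO Om" and b: "b \<in> CO Om"
    show "vnorm m (\<lambda>j. lam m xs a j - lam m xs b j) \<le> supn Om (\<lambda>x. a x - b x)"
    proof (rule vnorm_bound[OF m])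
      fix j assume j: "j < m"
      show "\<bar>lam m xs a j - lam m xs b j\<bar> \<le> supn Om (\<lambda>x. a x - b x)"
        using supn_upper[OF cOm contd[OF a b] xs[OF j]] j unfolding lam_def by simp
    qed
  qed
  have distC_nonneg: "\<And>g. g \<in> CO Om \<Longrightarrow> 0 \<le> distC Om g K"
    unfolding distC_def using f
    by (intro cINF_greatest) (auto intro!: supn_nonneg[OF cOm _ neOm] contd dest: subsetD[OF KCO])
  have distC_le: "\<And>g h. g \<in> CO Om \<Longrightarrow> h \<in> K \<Longrightarrow> distC Om g K \<le> supn Om (\<lambda>x. g x - h x)"
    unfolding distC_def
  proof (rule cINF_lower)
    fix g h assume g: "g \<in> CO Om" and "h \<in> K"
    show "bdd_below ((\<lambda>ha. supn Om (\<lambda>x. g x - ha x)) ` K)"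
      using g by (auto intro!: supn_nonneg[OF cOm _ neOm] contd dest: subsetD[OF KCO] simp: bdd_below_def)
  qed
  have bddS: "bdd_above ((\<lambda>a. INF b\<in>Sigma. supn Om (\<lambda>x. a x - b x)) ` K)"
  proof (rule bdd_aboveI2)
    fix a assume a: "a \<in> K"
    hence aCO: "a \<in> CO Om" using KCO by blast
    have "(INF b\<in>Sigma. supn Om (\<lambda>x. a x - b x)) \<le> supn Om (\<lambda>x. a x - fhat x)"
      using fhat(1) Sigma
      by (intro cINF_lower) (auto intro!: supn_nonneg[OF cOm _ neOm] contd[OF aCO] simp: bdd_below_def)
    also have "\<dots> \<le> supn Om a + supn Om fhat"
      by (rule supn_tri[OF cOm neOm cont[OF aCO] cont[OF fhatCO]]) simp
    also have "\<dots> \<le> M + supn Om fhat" using M[OF a] by simp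
    finally show "(INF b\<in>Sigma. supn Om (\<lambda>x. a x - b x)) \<le> M + supn Om fhat" .
  qed
  have "(INF b\<in>Sigma. supn Om (\<lambda>x. f x - b x)) < \<delta>"
    using cSUP_upper[OF f bddS] dist unfolding distCset_def by linarith
  then obtain g where g: "g \<in> Sigma" "supn Om (\<lambda>x. f x - g x) < \<delta>"
    using cInf_lessD[of "(\<lambda>b. supn Om (\<lambda>x. f x - b x)) ` Sigma"] fhat(1) by auto
  have gCO: "g \<in> CO Om" using g(1) Sigma by blast
  have "lossK Om m xs K w g \<le> supn Om (\<lambda>x. g x - f x) + supn Om (\<lambda>x. g x - f x)"
    unfolding lossK_def w_def using samp[OF gCO fCO] distC_le[OF gCO f] by simp
  also have "\<dots> < \<epsilon>" using g(2) sym[of g f] unfolding \<epsilon>_def by simp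
  finally have "lossK Om m xs K w fhat < \<epsilon>" using fhat(2)[OF g(1)] by simp
  hence L1: "vnorm m (\<lambda>j. lam m xs fhat j - w j) < \<epsilon>" and L2: "distC Om fhat K < \<epsilon>"
    unfolding lossK_def using distC_nonneg[OF fhatCO] vnorm_nonneg[of m] by (smt (verit))+
  obtain h where h: "h \<in> K" "supn Om (\<lambda>x. fhat x - h x) < \<epsilon>"
    using L2 cInf_lessD[of "(\<lambda>b. supn Om (\<lambda>x. fhat x - b x)) ` K"] f unfolding distC_def by auto
  have hCO: "h \<in> CO Om" using h(1) KCO by blast
  have "vnorm m (\<lambda>j. lam m xs h j - w j)
      = vnorm m (\<lambda>j. (lam m xs h j - lam m xs fhat j) + (lam m xs fhat j - w j))" by simp
  also have "\<dots> \<le> vnorm m (\<lambda>j. lam m xs h j - lam m xs fhat j) + vnorm m (\<lambda>j. lam m xs fhat j - w j)"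
    by (rule vnorm_tri)
  also have "\<dots> < 2 * \<epsilon>" using samp[OF hCO fhatCO] h(2) sym[of h fhat] L1 by simp
  finally have hw: "vnorm m (\<lambda>j. lam m xs h j - w j) < 2 * \<epsilon>" .
  have lamRm: "\<And>g. lam m xs g \<in> Rm m" unfolding Rm_def lam_def by simp
  have hS: "h \<in> Kweps m xs K w (2 * \<epsilon>)"
    unfolding Kweps_def Kw_def using h(1) hw lamRm[of h] by auto
  have "vnorm m (\<lambda>j. w j - w j) = 0" unfolding vnorm_def by simp
  hence fS: "f \<in> Kweps m xs K w (2 * \<epsilon>)"
    unfolding Kweps_def Kw_def using f lamRm[of f] \<delta> unfolding w_def \<epsilon>_def by auto
  define S where "S = Kweps m xs K w (2 * \<epsilon>)"
  have SK: "S \<subseteq> K" unfolding S_def Kweps_def Kw_def by auto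
  have Rne: "{r. \<exists>z. J ` S \<subseteq> cball z r} \<noteq> {}"
  proof -
    have "J ` S \<subseteq> cball 0 (CX * M)"
    proof
      fix y assume "y \<in> J ` S"
      then obtain g where g: "g \<in> K" "y = J g" using SK by blast
      have "norm (J g) \<le> CX * supn Om g" using J_bound g(1) KCO by blast
      also have "\<dots> \<le> CX * M" using M[OF g(1)] CX by simp
      finally show "y \<in> cball 0 (CX * M)" using g(2) by simp
    qed
    thus ?thesis by blast
  qed
  have "norm (J f - J h) / 2 \<le> chebR J S"
    unfolding chebR_def
  proof (rule cInf_greatest[OF Rne])
    fix r assume "r \<in> {r. \<exists>z. J ` S \<subseteq> cball z r}"
    then obtain z where z: "J ` S \<subseteq> cball z r" by blast
    have "dist z (J f) \<le> r" "dist z (J h) \<le> r" using z fS hS unfolding S_def by auto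
    moreover have "norm (J f - J h) \<le> dist z (J f) + dist z (J h)"
      by (metis dist_commute dist_norm dist_triangle)
    ultimately show "norm (J f - J h) / 2 \<le> r" by simp
  qed
  hence P1: "norm (J f - J h) \<le> 2 * chebR J S" by simp
  have "norm (J h - J fhat) = norm (J (\<lambda>x. h x - fhat x))" using Jdiff[OF hCO fhatCO] by simp
  also have "\<dots> \<le> CX * supn Om (\<lambda>x. h x - fhat x)"
    apply (rule J_bound) unfolding CO_def using hCO fhatCO contd[OF hCO fhatCO] by (auto simp: CO_def)
  also have "\<dots> \<le> CX * \<epsilon>" using h(2) sym[of h fhat] CX by simp
  finally have P2: "norm (J h - J fhat) \<le> CX * \<epsilon>" .
  have "norm (J f - J fhat) \<le> norm (J f - J h) + norm (J h - J fhat)"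
    by (rule norm_diff_triangle_le[of _ "J h"]) simp_all
  also have "\<dots> \<le> 2 * chebR J S + CX * \<epsilon>" using P1 P2 by simp
  also have "\<dots> \<le> C * chebR J (Kw m xs K w)" using cond unfolding S_def by simp
  finally show ?thesis .
qed

end
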